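(* Let $n\ge2$ and $W=(w_{ij},\ 1\le j<i\le n)\in(\mathbb{R}_{>0})^{n(n-1)/2}$, and let $T^\triangle_n(W)=(t_{ij},\ 1\le j<i\le n)$. Then the map $(\log w_{ij},\ 1\le j<i\le n)\mapsto(\log t_{ij},\ 1\le j<i\le n)$ has Jacobian $\pm1$.
   Context: Triangular arrays are $X=(x_{ij},\ 1\le j<i\le n)$ of positive reals. Local maps: for $i\ge3$, $l_{i1}$ replaces $x_{i1}$ by $x_{i-1,1}x_{i1}$; for $2\le j$ with $j+1<i$, $l_{ij}$ replaces $(x_{i-1,j-1},x_{i-1,j},x_{i,j-1},x_{ij})=(a,b,c,d)$ by $(bc/(ab+ac),b,c,d(b+c))$, other entries unchanged. For $1\le j\le n-2$, $\rho^{\triangle,n}_j=l_{n-j+1,1}\circ l_{n-j+2,2}\circ\cdots\circ l_{n-1,j-1}\circ l_{nj}$. $r^\triangle_{n,n-1}$ replaces $x_{n,n-1}$ by $1/x_{n,n-1}$. With conventions $x_{i0}=1$, $x_{n+1,n-1}=1$: for $k=0,\dots,\lfloor n/2\rfloor-1$, $b^{\triangle,n}_{n-2k,n-2k-1}$ replaces $x_{n-2k,n-2k-1}$ by $x_{n-2k+1,n-2k-1}x_{n-2k,n-2k-2}/x_{n-2k,n-2k-1}$; for $k=1,\dots,\lfloor(n-1)/2\rfloor$, $b^{\triangle,n}_{n-2k+1,n-2k}$ is the identity. $\rho^{\triangle,n}_{n-1}=b^{\triangle,n}_{2,1}\circ\cdots\circ b^{\triangle,n}_{n,n-1}\circ r^\triangle_{n,n-1}$,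 $R^\triangle_n=\rho^{\triangle,n}_{n-1}\circ\cdots\circ\rho^{\triangle,n}_1$. $T^\triangle_2(x_{21})=x_{21}$ and for $n\ge3$, $T^\triangle_n(X_n)=R^\triangle_n$ applied to the array whose first $n-1$ rows are $T^\triangle_{n-1}(x_{ij},\ 1\le j<i\le n-1)$ and whose last row is $(x_{n1},\dots,x_{n,n-1})$. *)

theory Defs
  imports "HOL-Analysis.Analysis" "HOL-Combinatorics.Permutations"
begin

text \<open>Triangular arrays are represented as functions nat => nat => real; only the
entries x i j with 1 <= j < i <= n are meaningful.\<close>

definition tri :: "nat \<Rightarrow> (nat \<times> nat) set" where
  "tri n = {(i, j). 1 \<le> j \<and> j < i \<and> i \<le> n}"

definition lmap :: "nat \<Rightarrow> nat \<Rightarrow> (nat \<Rightarrow> nat \<Rightarrow> real) \<Rightarrow> (nat \<Rightarrow> nat \<Rightarrow> real)" where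
  "lmap i j X =
    (if j = 1 then (\<lambda>p q. if p = i \<and> q = 1 then X (i - 1) 1 * X i 1 else X p q)
     else (let a = X (i - 1) (j - 1); b = X (i - 1) j; c = X i (j - 1); d = X i j in
       (\<lambda>p q. if p = i - 1 \<and> q = j - 1 then b * c / (a * b + a * c)
              else if p = i \<and> q = j then d * (b + c)
              else X p q)))"

definition rho :: "nat \<Rightarrow> nat \<Rightarrow> (nat \<Rightarrow> nat \<Rightarrow> real) \<Rightarrow> (nat \<Rightarrow> nat \<Rightarrow> real)" where
  "rho n j X = foldr (\<lambda>k. lmap (n - j + k) k) [1..<j+1] X"

definition rmap :: "nat \<Rightarrow> (nat \<Rightarrow> nat \<Rightarrow> real) \<Rightarrow> (nat \<Rightarrow> nat \<Rightarrow> real)" where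
  "rmap n X = (\<lambda>p q. if p = n \<and> q = n - 1 then 1 / X n (n - 1) else X p q)"

text \<open>b^{tri,n}_{m,m-1} for m = n - 2k (k >= 0, m >= 2), using the conventions
x_{i0} = 1 and x_{n+1,n-1} = 1; for m = n - 2k + 1 it is the identity.\<close>
definition bmap :: "nat \<Rightarrow> nat \<Rightarrow> (nat \<Rightarrow> nat \<Rightarrow> real) \<Rightarrow> (nat \<Rightarrow> nat \<Rightarrow> real)" where
  "bmap n m X =
    (if even (n - m) then
      (\<lambda>p q. if p = m \<and> q = m - 1 then
                (if m = n then 1 else X (m + 1) (m - 1)) * (if m = 2 then 1 else X m (m - 2))
                / X m (m - 1)
             else X p q)
     else X)"

definition rho_last :: "nat \<Rightarrow> (nat \<Rightarrow> nat \<Rightarrow> real) \<Rightarrow> (nat \<Rightarrow> nat \<Rightarrow> real)" where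
  "rho_last n X = foldr (bmap n) [2..<n+1] (rmap n X)"

definition Rtri :: "nat \<Rightarrow> (nat \<Rightarrow> nat \<Rightarrow> real) \<Rightarrow> (nat \<Rightarrow> nat \<Rightarrow> real)" where
  "Rtri n X = rho_last n (fold (rho n) [1..<n-1] X)"

fun Ttri :: "nat \<Rightarrow> (nat \<Rightarrow> nat \<Rightarrow> real) \<Rightarrow> (nat \<Rightarrow> nat \<Rightarrow> real)" where
  "Ttri (Suc (Suc (Suc n))) X =
     Rtri (n + 3) (\<lambda>i j. if i \<le> n + 2 then Ttri (n + 2) (\<lambda>p q. if p \<le> n + 2 then X p q else 1) i j
                         else X i j)"
| "Ttri _ X = X"

definition logT :: "nat \<Rightarrow> (nat \<times> nat \<Rightarrow> real) \<Rightarrow> (nat \<times> nat \<Rightarrow> real)" where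
  "logT n u = (\<lambda>(i, j). ln (Ttri n (\<lambda>p q. exp (u (p, q))) i j))"

definition det_on :: "'a set \<Rightarrow> ('a \<Rightarrow> 'a \<Rightarrow> real) \<Rightarrow> real" where
  "det_on I M = (\<Sum>p | p permutes I. of_int (sign p) * (\<Prod>a\<in>I. M a (p a)))"

end

theory Submission
  imports Defs
begin


lemma det_eqrows:
  fixes N :: "'a \<Rightarrow> 'a \<Rightarrow> real"
  assumes fin: "finite I" and a: "a \<in> I" and c: "c \<in> I" and ac: "a \<noteq> c" and eq: "N a = N c"
  shows "det_on I N = 0"
proof -
  define t where "t = Transposition.transpose a c"
  have tp: "t permutes I" unfolding t_def using a c by (rule permutes_swap_id)
  have tt: "t \<circ> t = id" unfolding t_def by simp
  have Nt: "N (t y) = N y" for y unfolding t_def Transposition.transpose_def using eq by auto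
  define f where "f p = of_int (sign p) * (\<Prod>x\<in>I. N x (p x))" for p :: "'a \<Rightarrow> 'a"
  have key: "f (p \<circ> t) = - f p" if p: "p permutes I" for p
  proof -
    have "(\<Prod>x\<in>I. N x (p (t x))) = (\<Prod>x\<in>I. (\<lambda>x. N x (p (t x))) (t x))"
      using prod.reindex_bij_betw[OF permutes_imp_bij[OF tp], of "\<lambda>x. N x (p (t x))"] by simp
    also have "\<dots> = (\<Prod>x\<in>I. N x (p x))"
      using tt by (simp add: Nt pointfree_idE)
    finally have P: "(\<Prod>x\<in>I. N x (p (t x))) = (\<Prod>x\<in>I. N x (p x))" .
    have "sign (p \<circ> t) = sign p * sign t"
      using p tp fin by (auto intro!: sign_compose simp: permutation_permutes)
    also have "sign t = -1" unfolding t_def using ac by (simp add: sign_swap_id)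
    finally have S: "sign (p \<circ> t) = - sign p" by (simp only: mult_minus1_right)
    show ?thesis unfolding f_def comp_apply S P by simp
  qed
  have "det_on I N = sum f {p. p permutes I}" unfolding det_on_def f_def by simp
  also have "\<dots> = sum (\<lambda>p. f (p \<circ> t)) {p. p permutes I}"
    apply (rule sum.reindex_bij_witness[where i="\<lambda>p. p \<circ> t" and j="\<lambda>p. p \<circ> t"])
    using tt tp by (auto simp: o_assoc[symmetric] permutes_compose)
  also have "\<dots> = - sum f {p. p permutes I}"
    using key by (simp add: sum_negf)
  finally have "det_on I N = - det_on I N" unfolding det_on_def f_def by simp
  then show ?thesis by simp
qed

lemma det_id:
  assumes fin: "finite I"
  shows "det_on I (\<lambda>a b. if a = b then 1 else 0) = 1"
proof -
  have "det_on I (\<lambda>a b. if a = b then 1 else 0) = (\<Sum>p | p permutes I. if p = id then 1 else 0)"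
    unfolding det_on_def
  proof (rule sum.cong[OF refl])
    fix p assume "p \<in> {p. p permutes I}"
    then have p: "p permutes I" by simp
    show "of_int (sign p) * (\<Prod>x\<in>I. if x = p x then 1 else 0) = (if p = id then 1 else (0::real))"
    proof (cases "p = id")
      case True then show ?thesis by simp
    next
      case False
      then obtain x where "p x \<noteq> x" by (auto simp: fun_eq_iff)
      with p have "x \<in> I" using permutes_not_in by metis
      with \<open>p x \<noteq> x\<close> fin have "(\<Prod>x\<in>I. if x = p x then 1 else (0::real)) = 0"
        by (metis (mono_tags, lifting) prod_zero_iff)
      with False show ?thesis by simp
    qed
  qed
  also have "\<dots> = 1" by (simp add: finite_permutations[OF fin])
  finally show ?thesis .
qed




lemma det_rowop:
  fixes M :: "'a \<Rightarrow> 'a \<Rightarrow> real"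
  assumes fin: "finite I" and a: "a \<in> I" and C: "C \<subseteq> I" "a \<notin> C"
  shows "det_on I (\<lambda>x b. if x = a then s * M a b + (\<Sum>c\<in>C. \<beta> c * M c b) else M x b) = s * det_on I M"
proof -
  have finC: "finite C" using C fin finite_subset by blast
  define D where "D R = (\<Sum>p | p permutes I. of_int (sign p) * (R (p a) * (\<Prod>x\<in>I-{a}. M x (p x))))" for R
  have row: "det_on I (\<lambda>x b. if x = a then R b else M x b) = D R" for R
    unfolding det_on_def D_def
  proof (rule sum.cong[OF refl])
    fix p
    have "(\<Prod>x\<in>I. if x = a then R (p x) else M x (p x)) = R (p a) * (\<Prod>x\<in>I-{a}. if x = a then R (p x) else M x (p x))"
      by (subst prod.remove[OF fin a]) simp
    also have "(\<Prod>x\<in>I-{a}. if x = a then R (p x) else M x (p x)) = (\<Prod>x\<in>I-{a}. M x (p x))"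
      by (rule prod.cong) auto
    finally show "of_int (sign p) * (\<Prod>x\<in>I. if x = a then R (p x) else M x (p x)) =
       of_int (sign p) * (R (p a) * (\<Prod>x\<in>I-{a}. M x (p x)))" by simp
  qed
  have lin: "D (\<lambda>b. s * M a b + (\<Sum>c\<in>C. \<beta> c * M c b)) = s * D (M a) + (\<Sum>c\<in>C. \<beta> c * D (M c))"
    unfolding D_def
    by (simp add: algebra_simps sum.distrib sum_distrib_left sum_distrib_right sum.swap[of _ C])
  have DA: "D (M a) = det_on I M"
  proof -
    have "(\<lambda>x b. if x = a then M a b else M x b) = M" by (auto simp: fun_eq_iff)
    then show ?thesis using row[of "M a"] by simp
  qed
  have DC: "D (M c) = 0" if c: "c \<in> C" for c
  proof -
    have "det_on I (\<lambda>x b. if x = a then M c b else M x b) = 0"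
      apply (rule det_eqrows[OF fin a, of c])
      using c C by auto
    then show ?thesis using row[of "M c"] by simp
  qed
  show ?thesis
    using row[of "\<lambda>b. s * M a b + (\<Sum>c\<in>C. \<beta> c * M c b)"] lin DA DC by simp
qed




type_synonym arr = "nat \<Rightarrow> nat \<Rightarrow> real"
type_synonym vc = "nat \<times> nat \<Rightarrow> real"

definition LF :: "(arr \<Rightarrow> arr) \<Rightarrow> vc \<Rightarrow> vc" where
  "LF F u = (\<lambda>(i, j). ln (F (\<lambda>p q. exp (u (p, q))) i j))"

definition posa :: "arr \<Rightarrow> bool" where "posa X \<longleftrightarrow> (\<forall>p q. X p q > 0)"

definition HasJ :: "(vc \<Rightarrow> vc) \<Rightarrow> (vc \<Rightarrow> vc \<Rightarrow> vc) \<Rightarrow> bool" where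
  "HasJ G JG \<longleftrightarrow> (\<forall>\<gamma> \<gamma>' s. (\<forall>c. ((\<lambda>t. \<gamma> t c) has_real_derivative \<gamma>' c) (at s)) \<longrightarrow>
      (\<forall>a. ((\<lambda>t. G (\<gamma> t) a) has_real_derivative JG (\<gamma> s) \<gamma>' a) (at s)))"

definition ev :: "nat \<times> nat \<Rightarrow> vc" where "ev b = (\<lambda>c. if c = b then 1 else 0)"

definition Good :: "(nat \<times> nat) set \<Rightarrow> (arr \<Rightarrow> arr) \<Rightarrow> bool" where
  "Good I F \<longleftrightarrow> (\<forall>X. posa X \<longrightarrow> posa (F X)) \<and>
     (\<exists>JF. HasJ (LF F) JF \<and> (\<forall>v. det_on I (\<lambda>a b. JF v (ev b) a) = 1 \<or> det_on I (\<lambda>a b. JF v (ev b) a) = -1))"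

lemma HasJ_comp:
  assumes "HasJ G JG" "HasJ H JH"
  shows "HasJ (\<lambda>v. H (G v)) (\<lambda>v w. JH (G v) (JG v w))"
  unfolding HasJ_def
proof (intro allI impI)
  fix \<gamma> :: "real \<Rightarrow> vc" and \<gamma>' :: vc and s :: real and a :: "nat \<times> nat"
  assume d: "\<forall>c. ((\<lambda>t. \<gamma> t c) has_real_derivative \<gamma>' c) (at s)"
  have "\<forall>c. ((\<lambda>t. G (\<gamma> t) c) has_real_derivative JG (\<gamma> s) \<gamma>' c) (at s)"
    using assms(1) d unfolding HasJ_def by blast
  then show "((\<lambda>t. H (G (\<gamma> t)) a) has_real_derivative JH (G (\<gamma> s)) (JG (\<gamma> s) \<gamma>') a) (at s)"
    using assms(2)[unfolded HasJ_def, rule_format, of "\<lambda>t. G (\<gamma> t)" "JG (\<gamma> s) \<gamma>'" s] by blast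
qed

lemma LF_comp:
  assumes "\<forall>X. posa X \<longrightarrow> posa (F X)"
  shows "LF (\<lambda>X. E (F X)) v = LF E (LF F v)"
proof -
  have "posa (\<lambda>p q. exp (v (p, q)))" by (simp add: posa_def)
  then have P: "posa (F (\<lambda>p q. exp (v (p, q))))" using assms by blast
  have "(\<lambda>p q. exp (LF F v (p, q))) = F (\<lambda>p q. exp (v (p, q)))"
    using P by (auto simp: LF_def posa_def fun_eq_iff)
  then show ?thesis by (simp add: LF_def)
qed

lemma Good_id:
  assumes "finite I"
  shows "Good I (\<lambda>X. X)"
proof -
  have L: "LF (\<lambda>X. X) = (\<lambda>v. v)" by (auto simp: LF_def fun_eq_iff)
  have "HasJ (LF (\<lambda>X. X)) (\<lambda>v w. w)" unfolding L HasJ_def by blast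
  moreover have "(\<lambda>a b. ev b a) = (\<lambda>a b. if a = b then 1 else 0)" by (auto simp: ev_def fun_eq_iff)
  ultimately show ?thesis unfolding Good_def using det_id[OF assms] by auto
qed

lemma Good_elem:
  assumes G: "Good I F" and fin: "finite I" and pE: "\<forall>X. posa X \<longrightarrow> posa (E X)"
    and a: "a \<in> I" and C: "C \<subseteq> I" "a \<notin> C" and s: "s = 1 \<or> s = -1"
    and HE: "HasJ (LF E) (\<lambda>p w. w(a := s * w a + (\<Sum>c\<in>C. \<beta> p c * w c)))"
  shows "Good I (\<lambda>X. E (F X))"
proof -
  obtain JF where pF: "\<forall>X. posa X \<longrightarrow> posa (F X)" and HF: "HasJ (LF F) JF"
    and dF: "\<forall>v. det_on I (\<lambda>a b. JF v (ev b) a) = 1 \<or> det_on I (\<lambda>a b. JF v (ev b) a) = -1"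
    using G unfolding Good_def by blast
  have L: "LF (\<lambda>X. E (F X)) = (\<lambda>v. LF E (LF F v))" using LF_comp[OF pF] by blast
  define J where "J v w = (JF v w)(a := s * JF v w a + (\<Sum>c\<in>C. \<beta> (LF F v) c * JF v w c))" for v w
  have HJ: "HasJ (LF (\<lambda>X. E (F X))) J"
    unfolding L J_def using HasJ_comp[OF HF HE] by simp
  have D: "det_on I (\<lambda>x b. J v (ev b) x) = s * det_on I (\<lambda>x b. JF v (ev b) x)" for v
  proof -
    have "(\<lambda>x b. J v (ev b) x) = (\<lambda>x b. if x = a then s * (\<lambda>x b. JF v (ev b) x) a b +
         (\<Sum>c\<in>C. \<beta> (LF F v) c * (\<lambda>x b. JF v (ev b) x) c b) else (\<lambda>x b. JF v (ev b) x) x b)"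
      by (auto simp: J_def fun_eq_iff)
    then show ?thesis using det_rowop[OF fin a C, of s "\<lambda>x b. JF v (ev b) x" "\<beta> (LF F v)"] by simp
  qed
  have pEF: "\<forall>X. posa X \<longrightarrow> posa (E (F X))" using pE pF by blast
  show ?thesis unfolding Good_def
    apply (intro conjI pEF exI[of _ J] HJ allI)
    using D dF s by (metis mult_1 mult_minus1 minus_minus)
qed

lemma HasJ_elem:
  assumes L: "\<And>v. LF E v = (\<lambda>x. if x = a then \<psi> v else v x)"
    and d: "\<And>\<gamma> \<gamma>' t0. (\<forall>c. ((\<lambda>t. \<gamma> t c) has_real_derivative \<gamma>' c) (at t0)) \<Longrightarrow>
        ((\<lambda>t. \<psi> (\<gamma> t)) has_real_derivative (s * \<gamma>' a + (\<Sum>c\<in>C. \<beta> (\<gamma> t0) c * \<gamma>' c))) (at t0)"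
  shows "HasJ (LF E) (\<lambda>p w. w(a := s * w a + (\<Sum>c\<in>C. \<beta> p c * w c)))"
  unfolding HasJ_def L
proof (intro allI impI)
  fix \<gamma> :: "real \<Rightarrow> vc" and \<gamma>' :: vc and s0 :: real and x :: "nat \<times> nat"
  assume h: "\<forall>c. ((\<lambda>t. \<gamma> t c) has_real_derivative \<gamma>' c) (at s0)"
  show "((\<lambda>t. (if x = a then \<psi> (\<gamma> t) else \<gamma> t x)) has_real_derivative
     (\<gamma>'(a := s * \<gamma>' a + (\<Sum>c\<in>C. \<beta> (\<gamma> s0) c * \<gamma>' c))) x) (at s0)"
  proof (cases "x = a")
    case True then show ?thesis using d[OF h] by simp
  next
    case False then show ?thesis using h[rule_format, of x] by simp
  qed
qed




definition inv_at :: "nat \<Rightarrow> nat \<Rightarrow> arr \<Rightarrow> arr" where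
  "inv_at i j X = (\<lambda>p q. if p = i \<and> q = j then 1 / X i j else X p q)"
definition mul_at :: "nat \<Rightarrow> nat \<Rightarrow> nat \<Rightarrow> nat \<Rightarrow> arr \<Rightarrow> arr" where
  "mul_at i j k l X = (\<lambda>p q. if p = i \<and> q = j then X i j * X k l else X p q)"
definition sum_at :: "nat \<Rightarrow> nat \<Rightarrow> nat \<Rightarrow> nat \<Rightarrow> nat \<Rightarrow> nat \<Rightarrow> arr \<Rightarrow> arr" where
  "sum_at i j b1 b2 c1 c2 X = (\<lambda>p q. if p = i \<and> q = j then X i j * (X b1 b2 + X c1 c2) else X p q)"
definition hm_at :: "nat \<Rightarrow> nat \<Rightarrow> nat \<Rightarrow> nat \<Rightarrow> nat \<Rightarrow> nat \<Rightarrow> arr \<Rightarrow> arr" where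
  "hm_at i j b1 b2 c1 c2 X = (\<lambda>p q. if p = i \<and> q = j then X i j * (X b1 b2 * X c1 c2 / (X b1 b2 + X c1 c2)) else X p q)"

lemma expsum_ne [simp]: "exp a + exp b \<noteq> (0::real)"
  by (metis add_pos_pos exp_gt_zero less_irrefl)

lemma Good_inv:
  assumes "Good I F" "finite I" "(i, j) \<in> I"
  shows "Good I (\<lambda>X. inv_at i j (F X))"
proof (rule Good_elem[OF assms(1,2), where a="(i,j)" and C="{}" and s="-1" and \<beta>="\<lambda>p c. 0"])
  show "\<forall>X. posa X \<longrightarrow> posa (inv_at i j X)" by (auto simp: posa_def inv_at_def)
  show "HasJ (LF (inv_at i j)) (\<lambda>p w. w((i, j) := - 1 * w (i, j) + (\<Sum>c\<in>{}. 0 * w c)))"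
  proof (rule HasJ_elem[where \<psi>="\<lambda>v. - v (i,j)"])
    show "LF (inv_at i j) v = (\<lambda>x. if x = (i, j) then - v (i, j) else v x)" for v
      by (auto simp: LF_def inv_at_def fun_eq_iff ln_div)
    show "((\<lambda>t. - \<gamma> t (i, j)) has_real_derivative - 1 * \<gamma>' (i, j) + (\<Sum>c\<in>{}. 0 * \<gamma>' c)) (at t0)"
      if "\<forall>c. ((\<lambda>t. \<gamma> t c) has_real_derivative \<gamma>' c) (at t0)" for \<gamma> \<gamma>' t0
      using that by (auto intro!: derivative_eq_intros)
  qed
qed (use assms in auto)

lemma Good_mul:
  assumes "Good I F" "finite I" "(i, j) \<in> I" "(k, l) \<in> I" "(i, j) \<noteq> (k, l)"
  shows "Good I (\<lambda>X. mul_at i j k l (F X))"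
proof (rule Good_elem[OF assms(1,2), where a="(i,j)" and C="{(k,l)}" and s="1" and \<beta>="\<lambda>p c. 1"])
  show "\<forall>X. posa X \<longrightarrow> posa (mul_at i j k l X)" by (auto simp: posa_def mul_at_def)
  show "HasJ (LF (mul_at i j k l)) (\<lambda>p w. w((i, j) := 1 * w (i, j) + (\<Sum>c\<in>{(k,l)}. 1 * w c)))"
  proof (rule HasJ_elem[where \<psi>="\<lambda>v. v (i,j) + v (k,l)"])
    show "LF (mul_at i j k l) v = (\<lambda>x. if x = (i, j) then v (i, j) + v (k, l) else v x)" for v
      by (auto simp: LF_def mul_at_def fun_eq_iff exp_add[symmetric])
    show "((\<lambda>t. \<gamma> t (i, j) + \<gamma> t (k, l)) has_real_derivative 1 * \<gamma>' (i, j) + (\<Sum>c\<in>{(k,l)}. 1 * \<gamma>' c)) (at t0)"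
      if "\<forall>c. ((\<lambda>t. \<gamma> t c) has_real_derivative \<gamma>' c) (at t0)" for \<gamma> \<gamma>' t0
      using that by (auto intro!: derivative_eq_intros)
  qed
qed (use assms in auto)

lemma dlnsum:
  assumes "\<forall>c. ((\<lambda>t. \<gamma> t c) has_real_derivative \<gamma>' c) (at t0)"
  shows "((\<lambda>t. ln (exp (\<gamma> t b) + exp (\<gamma> t c))) has_real_derivative
     (exp (\<gamma> t0 b) * \<gamma>' b + exp (\<gamma> t0 c) * \<gamma>' c) / (exp (\<gamma> t0 b) + exp (\<gamma> t0 c))) (at t0)"
  using assms by (auto intro!: derivative_eq_intros simp: add_pos_pos)

lemma Good_sum:
  assumes "Good I F" "finite I" "(i, j) \<in> I" "(b1, b2) \<in> I" "(c1, c2) \<in> I"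
    "(i, j) \<noteq> (b1, b2)" "(i, j) \<noteq> (c1, c2)" "(b1, b2) \<noteq> (c1, c2)"
  shows "Good I (\<lambda>X. sum_at i j b1 b2 c1 c2 (F X))"
proof (rule Good_elem[OF assms(1,2), where a="(i,j)" and C="{(b1,b2),(c1,c2)}" and s="1"
     and \<beta>="\<lambda>p x. exp (p x) / (exp (p (b1,b2)) + exp (p (c1,c2)))"])
  show "\<forall>X. posa X \<longrightarrow> posa (sum_at i j b1 b2 c1 c2 X)" by (auto simp: posa_def sum_at_def add_pos_pos)
  show "HasJ (LF (sum_at i j b1 b2 c1 c2)) (\<lambda>p w. w((i, j) := 1 * w (i, j) +
     (\<Sum>x\<in>{(b1,b2),(c1,c2)}. exp (p x) / (exp (p (b1,b2)) + exp (p (c1,c2))) * w x)))"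
  proof (rule HasJ_elem[where \<psi>="\<lambda>v. v (i,j) + ln (exp (v (b1,b2)) + exp (v (c1,c2)))"])
    show "LF (sum_at i j b1 b2 c1 c2) v = (\<lambda>x. if x = (i, j) then v (i,j) + ln (exp (v (b1,b2)) + exp (v (c1,c2))) else v x)" for v
      by (auto simp: LF_def sum_at_def fun_eq_iff ln_mult add_pos_pos)
    show "((\<lambda>t. \<gamma> t (i, j) + ln (exp (\<gamma> t (b1,b2)) + exp (\<gamma> t (c1,c2)))) has_real_derivative 1 * \<gamma>' (i, j) +
      (\<Sum>x\<in>{(b1,b2),(c1,c2)}. exp (\<gamma> t0 x) / (exp (\<gamma> t0 (b1,b2)) + exp (\<gamma> t0 (c1,c2))) * \<gamma>' x)) (at t0)"
      if h: "\<forall>c. ((\<lambda>t. \<gamma> t c) has_real_derivative \<gamma>' c) (at t0)" for \<gamma> \<gamma>' t0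
      using DERIV_add[OF h[rule_format, of "(i,j)"] dlnsum[OF h, of "(b1,b2)" "(c1,c2)"]] assms(8)
      by (simp add: add_divide_distrib)
  qed
qed (use assms in auto)

lemma Good_hm:
  assumes "Good I F" "finite I" "(i, j) \<in> I" "(b1, b2) \<in> I" "(c1, c2) \<in> I"
    "(i, j) \<noteq> (b1, b2)" "(i, j) \<noteq> (c1, c2)" "(b1, b2) \<noteq> (c1, c2)"
  shows "Good I (\<lambda>X. hm_at i j b1 b2 c1 c2 (F X))"
proof (rule Good_elem[OF assms(1,2), where a="(i,j)" and C="{(b1,b2),(c1,c2)}" and s="1"
     and \<beta>="\<lambda>p x. 1 - exp (p x) / (exp (p (b1,b2)) + exp (p (c1,c2)))"])
  show "\<forall>X. posa X \<longrightarrow> posa (hm_at i j b1 b2 c1 c2 X)" by (auto simp: posa_def hm_at_def add_pos_pos)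
  show "HasJ (LF (hm_at i j b1 b2 c1 c2)) (\<lambda>p w. w((i, j) := 1 * w (i, j) +
     (\<Sum>x\<in>{(b1,b2),(c1,c2)}. (1 - exp (p x) / (exp (p (b1,b2)) + exp (p (c1,c2)))) * w x)))"
  proof (rule HasJ_elem[where \<psi>="\<lambda>v. v (i,j) + (v (b1,b2) + v (c1, c2) - ln (exp (v (b1,b2)) + exp (v (c1,c2))))"])
    show "LF (hm_at i j b1 b2 c1 c2) v = (\<lambda>x. if x = (i, j) then v (i,j) + (v (b1,b2) + v (c1, c2) - ln (exp (v (b1,b2)) + exp (v (c1,c2)))) else v x)" for v
      by (auto simp: LF_def hm_at_def fun_eq_iff ln_mult ln_div add_pos_pos exp_add[symmetric])
    show "((\<lambda>t. \<gamma> t (i, j) + (\<gamma> t (b1,b2) + \<gamma> t (c1, c2) - ln (exp (\<gamma> t (b1,b2)) + exp (\<gamma> t (c1,c2))))) has_real_derivative 1 * \<gamma>' (i, j) +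
      (\<Sum>x\<in>{(b1,b2),(c1,c2)}. (1 - exp (\<gamma> t0 x) / (exp (\<gamma> t0 (b1,b2)) + exp (\<gamma> t0 (c1,c2)))) * \<gamma>' x)) (at t0)"
      if h: "\<forall>c. ((\<lambda>t. \<gamma> t c) has_real_derivative \<gamma>' c) (at t0)" for \<gamma> \<gamma>' t0
      using DERIV_add[OF h[rule_format, of "(i,j)"] DERIV_diff[OF DERIV_add[OF h[rule_format, of "(b1,b2)"] h[rule_format, of "(c1,c2)"]] dlnsum[OF h, of "(b1,b2)" "(c1,c2)"]]] assms(8)
      by (simp add: add_divide_distrib algebra_simps diff_divide_distrib)
  qed
qed (use assms in auto)




lemma tri_mem [simp]: "(p, q) \<in> tri N \<longleftrightarrow> 1 \<le> q \<and> q < p \<and> p \<le> N"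
  by (simp add: tri_def)

lemma fin_tri: "finite (tri N)"
  by (rule finite_subset[of _ "{0..N} \<times> {0..N}"]) (auto simp: tri_def)

lemma lmap_eq1: "lmap i 1 X = mul_at i 1 (i - 1) 1 X"
  by (auto simp: lmap_def mul_at_def fun_eq_iff)

lemma lmap_eq2:
  assumes "1 \<le> i" "2 \<le> j"
  shows "lmap i j X = sum_at i j (i - 1) j i (j - 1) (hm_at (i - 1) (j - 1) (i - 1) j i (j - 1) (inv_at (i - 1) (j - 1) X))"
    (is "_ = ?W")
proof -
  let ?a = "X (i - 1) (j - 1)" and ?b = "X (i - 1) j" and ?c = "X i (j - 1)"
  have e: "?b * ?c / (?a * ?b + ?a * ?c) = 1 / ?a * (?b * ?c / (?b + ?c))"
    by (simp add: distrib_left[symmetric])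
  have n1: "j \<noteq> 1" "i - 1 \<noteq> i" "j - 1 \<noteq> j" "i \<noteq> i - 1" "j \<noteq> j - 1" using assms by auto
  have L: "lmap i j X = (\<lambda>p q. if p = i - 1 \<and> q = j - 1 then ?b * ?c / (?a * ?b + ?a * ?c)
              else if p = i \<and> q = j then X i j * (?b + ?c) else X p q)"
    using n1(1) unfolding lmap_def Let_def by simp
  define Y where "Y = inv_at (i - 1) (j - 1) X"
  define Z where "Z = hm_at (i - 1) (j - 1) (i - 1) j i (j - 1) Y"
  have Y: "Y (i - 1) (j - 1) = 1 / ?a" "Y (i - 1) j = ?b" "Y i (j - 1) = ?c" "Y i j = X i j"
     "\<not> (p = i - 1 \<and> q = j - 1) \<Longrightarrow> Y p q = X p q" for p q
    using n1 by (auto simp: Y_def inv_at_def)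
  have Z: "Z (i - 1) (j - 1) = 1 / ?a * (?b * ?c / (?b + ?c))" "Z (i - 1) j = ?b" "Z i (j - 1) = ?c" "Z i j = X i j"
     "\<not> (p = i - 1 \<and> q = j - 1) \<Longrightarrow> Z p q = X p q" for p q
    using n1 Y by (auto simp: Z_def hm_at_def)
  have W: "?W = sum_at i j (i - 1) j i (j - 1) Z" by (simp add: Y_def Z_def)
  show ?thesis unfolding L W
  proof (intro ext)
    fix p q
    show "(if p = i - 1 \<and> q = j - 1 then ?b * ?c / (?a * ?b + ?a * ?c)
              else if p = i \<and> q = j then X i j * (?b + ?c) else X p q) = sum_at i j (i - 1) j i (j - 1) Z p q"
      using n1 Z e unfolding sum_at_def by auto
  qed
qed
lemma Good_lmap:
  assumes G: "Good (tri N) F" and ij: "1 \<le> j" "j < i" "i \<le> N" "j = 1 \<longrightarrow> 3 \<le> i" "2 \<le> j \<longrightarrow> j + 1 < i"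
  shows "Good (tri N) (\<lambda>X. lmap i j (F X))"
proof (cases "j = 1")
  case True
  have "Good (tri N) (\<lambda>X. mul_at i 1 (i - 1) 1 (F X))"
    by (rule Good_mul[OF G fin_tri]) (use ij True in auto)
  then show ?thesis unfolding lmap_eq1 True .
next
  case False
  then have j2: "2 \<le> j" using ij by simp
  have "Good (tri N) (\<lambda>X. inv_at (i - 1) (j - 1) (F X))"
    using j2 ij by (intro Good_inv[OF G fin_tri]) auto
  then have "Good (tri N) (\<lambda>X. hm_at (i - 1) (j - 1) (i - 1) j i (j - 1) (inv_at (i - 1) (j - 1) (F X)))"
    using j2 ij by (intro Good_hm[OF _ fin_tri]) auto
  then have "Good (tri N) (\<lambda>X. sum_at i j (i - 1) j i (j - 1) (hm_at (i - 1) (j - 1) (i - 1) j i (j - 1) (inv_at (i - 1) (j - 1) (F X))))"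
    using j2 ij by (intro Good_sum[OF _ fin_tri]) auto
  then show ?thesis using lmap_eq2[of i j] j2 ij by simp
qed

lemma Good_foldr:
  assumes "\<And>k F. k \<in> set xs \<Longrightarrow> Good I F \<Longrightarrow> Good I (\<lambda>X. g k (F X))" "Good I F"
  shows "Good I (\<lambda>X. foldr g xs (F X))"
  using assms by (induction xs) auto

lemma Good_fold:
  assumes "\<And>k F. k \<in> set xs \<Longrightarrow> Good I F \<Longrightarrow> Good I (\<lambda>X. g k (F X))" "Good I F"
  shows "Good I (\<lambda>X. fold g xs (F X))"
  using assms
proof (induction xs arbitrary: F)
  case Nil then show ?case by simp
next
  case (Cons k xs)
  have "Good I (\<lambda>X. g k (F X))" using Cons.prems by simp
  then have "Good I (\<lambda>X. fold g xs ((\<lambda>X. g k (F X)) X))"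
    using Cons.IH Cons.prems(1) by simp
  then show ?case by simp
qed

lemma Good_rho:
  assumes G: "Good (tri N) F" and j: "1 \<le> j" "j + 2 \<le> n" "n \<le> N"
  shows "Good (tri N) (\<lambda>X. rho n j (F X))"
  unfolding rho_def
proof (rule Good_foldr[OF _ G])
  fix k F' assume k: "k \<in> set [1..<j+1]" and G': "Good (tri N) F'"
  show "Good (tri N) (\<lambda>X. lmap (n - j + k) k (F' X))"
    using k j by (intro Good_lmap[OF G']) auto
qed

definition optmul :: "bool \<Rightarrow> nat \<Rightarrow> nat \<Rightarrow> nat \<Rightarrow> nat \<Rightarrow> arr \<Rightarrow> arr" where
  "optmul P i j k l Y = (if P then Y else mul_at i j k l Y)"

lemma Good_optmul:
  assumes "Good I F" "finite I" "\<not> P \<Longrightarrow> (i, j) \<in> I \<and> (k, l) \<in> I \<and> (i, j) \<noteq> (k, l)"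
  shows "Good I (\<lambda>X. optmul P i j k l (F X))"
  using assms Good_mul[OF assms(1,2)] by (cases P) (auto simp: optmul_def)

lemma bmap_eq:
  assumes m: "2 \<le> m"
  shows "bmap n m X = (if even (n - m) then optmul (m = 2) m (m - 1) m (m - 2) (optmul (m = n) m (m - 1) (m + 1) (m - 1) (inv_at m (m - 1) X)) else X)"
proof (cases "even (n - m)")
  case False then show ?thesis by (simp add: bmap_def)
next
  case True
  define x where "x = X m (m - 1)"
  define A where "A = (if m = n then 1 else X (m + 1) (m - 1))"
  define B where "B = (if m = 2 then 1 else X m (m - 2))"
  have L: "bmap n m X = (\<lambda>p q. if p = m \<and> q = m - 1 then A * B / x else X p q)"
    unfolding bmap_def A_def B_def x_def by (simp only: True if_True)
  define Y where "Y = inv_at m (m - 1) X"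
  define Z where "Z = optmul (m = n) m (m - 1) (m + 1) (m - 1) Y"
  have nm: "m - 1 \<noteq> m - 2" "m + 1 \<noteq> m" using m by auto
  have Y: "Y m (m - 1) = 1 / x" "\<not> (p = m \<and> q = m - 1) \<Longrightarrow> Y p q = X p q" for p q
    by (auto simp: Y_def inv_at_def x_def)
  have Z: "Z m (m - 1) = 1 / x * A" "\<not> (p = m \<and> q = m - 1) \<Longrightarrow> Z p q = X p q" for p q
    using Y nm by (auto simp: Z_def optmul_def mul_at_def A_def)
  have W: "optmul (m = 2) m (m - 1) m (m - 2) Z = (\<lambda>p q. if p = m \<and> q = m - 1 then 1 / x * A * B else X p q)"
    using Z nm by (auto simp: optmul_def mul_at_def B_def fun_eq_iff)
  have eq: "1 / x * A * B = A * B / x" by simp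
  show ?thesis unfolding L Z_def[symmetric] Y_def[symmetric] W eq by (simp only: True if_True)
qed
lemma Good_bmap:
  assumes G: "Good (tri N) F" and m: "2 \<le> m" "m \<le> n" "n \<le> N"
  shows "Good (tri N) (\<lambda>X. bmap n m (F X))"
proof (cases "even (n - m)")
  case True
  have "Good (tri N) (\<lambda>X. inv_at m (m - 1) (F X))" using m by (intro Good_inv[OF G fin_tri]) auto
  then have "Good (tri N) (\<lambda>X. optmul (m = n) m (m - 1) (m + 1) (m - 1) (inv_at m (m - 1) (F X)))"
    by (rule Good_optmul[OF _ fin_tri]) (use m in auto)
  then have "Good (tri N) (\<lambda>X. optmul (m = 2) m (m - 1) m (m - 2) (optmul (m = n) m (m - 1) (m + 1) (m - 1) (inv_at m (m - 1) (F X))))"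
    by (rule Good_optmul[OF _ fin_tri]) (use m in auto)
  then show ?thesis using True m by (simp add: bmap_eq)
next
  case False then show ?thesis using G m by (simp add: bmap_eq)
qed

lemma Good_Rtri:
  assumes G: "Good (tri N) F" and n: "2 \<le> n" "n \<le> N"
  shows "Good (tri N) (\<lambda>X. Rtri n (F X))"
proof -
  have 1: "Good (tri N) (\<lambda>X. fold (rho n) [1..<n-1] (F X))"
    by (rule Good_fold[OF _ G]) (use n in \<open>auto intro!: Good_rho\<close>)
  have 2: "Good (tri N) (\<lambda>X. rmap n (fold (rho n) [1..<n-1] (F X)))"
  proof -
    have "rmap n = inv_at n (n - 1)" by (auto simp: rmap_def inv_at_def fun_eq_iff)
    then show ?thesis using Good_inv[OF 1 fin_tri, of n "n - 1"] n by simp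
  qed
  have "Good (tri N) (\<lambda>X. foldr (bmap n) [2..<n+1] (rmap n (fold (rho n) [1..<n-1] (F X))))"
    by (rule Good_foldr[OF _ 2]) (use n in \<open>auto intro!: Good_bmap\<close>)
  then show ?thesis by (simp add: Rtri_def rho_last_def)
qed




definition RL :: "nat \<Rightarrow> (arr \<Rightarrow> arr) \<Rightarrow> bool" where
  "RL m F \<longleftrightarrow> (\<forall>X i. m < i \<longrightarrow> F X i = X i) \<and> (\<forall>X Y. (\<forall>i\<le>m. X i = Y i) \<longrightarrow> (\<forall>i\<le>m. F X i = F Y i))"

lemma RL_comp: assumes "RL m F" "RL m G" shows "RL m (\<lambda>X. G (F X))"
proof -
  have F1: "\<And>X i. m < i \<Longrightarrow> F X i = X i" and F2: "\<And>X Y i. (\<forall>i\<le>m. X i = Y i) \<Longrightarrow> i \<le> m \<Longrightarrow> F X i = F Y i"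
    using assms(1) unfolding RL_def by blast+
  have G1: "\<And>X i. m < i \<Longrightarrow> G X i = X i" and G2: "\<And>X Y i. (\<forall>i\<le>m. X i = Y i) \<Longrightarrow> i \<le> m \<Longrightarrow> G X i = G Y i"
    using assms(2) unfolding RL_def by blast+
  show ?thesis unfolding RL_def
  proof (intro conjI allI impI)
    fix X :: arr and i :: nat assume "m < i" then show "G (F X) i = X i" using F1 G1 by simp
  next
    fix X Y :: arr and i :: nat assume h: "\<forall>i\<le>m. X i = Y i" and i: "i \<le> m"
    have "\<forall>i\<le>m. F X i = F Y i" using F2[OF h] by blast
    then show "G (F X) i = G (F Y) i" using G2 i by blast
  qed
qed

lemma RL_id: "RL m (\<lambda>X. X)" unfolding RL_def by auto

lemma RL_mono: assumes "RL m F" "m \<le> m'" shows "RL m' F"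
proof -
  have F1: "\<And>X i. m < i \<Longrightarrow> F X i = X i" and F2: "\<And>X Y i. (\<forall>i\<le>m. X i = Y i) \<Longrightarrow> i \<le> m \<Longrightarrow> F X i = F Y i"
    using assms(1) unfolding RL_def by blast+
  show ?thesis unfolding RL_def
  proof (intro conjI allI impI)
    fix X :: arr and i :: nat assume "m' < i" then show "F X i = X i" using F1 assms(2) by simp
  next
    fix X Y :: arr and i :: nat assume h: "\<forall>i\<le>m'. X i = Y i" and i: "i \<le> m'"
    show "F X i = F Y i"
    proof (cases "i \<le> m")
      case True
      have "\<forall>i\<le>m. X i = Y i" using h assms(2) by simp
      then show ?thesis using F2 True by blast
    next
      case False then show ?thesis using F1 h i by simp
    qed
  qed
qed

lemma RL_foldr: "(\<And>k. k \<in> set xs \<Longrightarrow> RL m (g k)) \<Longrightarrow> RL m (foldr g xs)"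
proof (induction xs)
  case Nil then show ?case using RL_id by (simp add: id_def)
next
  case (Cons k xs)
  have a: "RL m (foldr g xs)" using Cons.IH Cons.prems by simp
  have b: "RL m (g k)" using Cons.prems by simp
  have "RL m (\<lambda>X. g k (foldr g xs X))" using RL_comp[OF a b] .
  then show ?case by (simp add: o_def)
qed

lemma RL_fold: "(\<And>k. k \<in> set xs \<Longrightarrow> RL m (g k)) \<Longrightarrow> RL m F \<Longrightarrow> RL m (\<lambda>X. fold g xs (F X))"
proof (induction xs arbitrary: F)
  case Nil then show ?case by simp
next
  case (Cons k xs)
  have "RL m (\<lambda>X. g k (F X))" using RL_comp[OF Cons.prems(2), of "g k"] Cons.prems(1) by simp
  then have "RL m (\<lambda>X. fold g xs ((\<lambda>X. g k (F X)) X))" using Cons.IH Cons.prems(1) by simp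
  then show ?case by simp
qed

lemma RL_lmap: assumes "i \<le> m" shows "RL m (lmap i j)"
  unfolding RL_def
proof (intro conjI allI impI)
  fix X :: arr and i' :: nat assume "m < i'"
  then have "i' \<noteq> i" "i' \<noteq> i - 1" using assms by auto
  then show "lmap i j X i' = X i'" by (intro ext) (simp add: lmap_def Let_def)
next
  fix X Y :: arr and i' :: nat assume h: "\<forall>i\<le>m. X i = Y i" and i': "i' \<le> m"
  have h': "p \<le> m \<Longrightarrow> X p q = Y p q" for p q using h by simp
  show "lmap i j X i' = lmap i j Y i'"
  proof
    fix q show "lmap i j X i' q = lmap i j Y i' q"
      using assms i' by (simp add: lmap_def Let_def h')
  qed
qed

lemma RL_rmap: assumes "n \<le> m" shows "RL m (rmap n)"
  unfolding RL_def
proof (intro conjI allI impI)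
  fix X :: arr and i' :: nat assume "m < i'"
  then have "i' \<noteq> n" using assms by simp
  then show "rmap n X i' = X i'" by (intro ext) (simp add: rmap_def)
next
  fix X Y :: arr and i' :: nat assume h: "\<forall>i\<le>m. X i = Y i" and i': "i' \<le> m"
  have h': "p \<le> m \<Longrightarrow> X p q = Y p q" for p q using h by simp
  show "rmap n X i' = rmap n Y i'"
  proof
    fix q show "rmap n X i' q = rmap n Y i' q"
      using assms i' by (simp add: rmap_def h')
  qed
qed

lemma RL_bmap: assumes "k \<le> n" shows "RL n (bmap n k)"
  unfolding RL_def
proof (intro conjI allI impI)
  fix X :: arr and i' :: nat assume "n < i'"
  then have "i' \<noteq> k" using assms by simp
  then show "bmap n k X i' = X i'" by (intro ext) (simp add: bmap_def)
next
  fix X Y :: arr and i' :: nat assume h: "\<forall>i\<le>n. X i = Y i" and i': "i' \<le> n"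
  have h': "p \<le> n \<Longrightarrow> X p q = Y p q" for p q using h by simp
  show "bmap n k X i' = bmap n k Y i'"
  proof
    fix q show "bmap n k X i' q = bmap n k Y i' q"
      using assms i' by (cases "k = n") (simp_all add: bmap_def h')
  qed
qed

lemma RL_Rtri: "RL n (Rtri n)"
proof -
  have r: "RL n (rho n k)" if "k \<in> set [1..<n-1]" for k
    unfolding rho_def by (rule RL_foldr) (use that in \<open>auto intro!: RL_lmap\<close>)
  have 1: "RL n (\<lambda>X. fold (rho n) [1..<n-1] X)"
    using RL_fold[of "[1..<n-1]" n "rho n" "\<lambda>X. X", OF r RL_id] by simp
  have 2: "RL n (\<lambda>X. rmap n (fold (rho n) [1..<n-1] X))"
    by (rule RL_comp[OF 1 RL_rmap]) simp
  have "RL n (\<lambda>X. foldr (bmap n) [2..<n+1] (rmap n (fold (rho n) [1..<n-1] X)))"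
    by (rule RL_comp[OF 2 RL_foldr]) (auto intro: RL_bmap)
  then show ?thesis unfolding Rtri_def rho_last_def by (simp add: o_def)
qed

lemma Phi_eq:
  assumes "RL m F"
  shows "(\<lambda>i j. if i \<le> m then F (\<lambda>p q. if p \<le> m then X p q else 1) i j else X i j) = F X"
proof (intro ext)
  fix i j
  show "(if i \<le> m then F (\<lambda>p q. if p \<le> m then X p q else 1) i j else X i j) = F X i j"
  proof (cases "i \<le> m")
    case True
    have F2: "\<And>X Y i. (\<forall>i\<le>m. X i = Y i) \<Longrightarrow> i \<le> m \<Longrightarrow> F X i = F Y i"
      using assms unfolding RL_def by blast
    have mk: "\<forall>p\<le>m. (\<lambda>p q. if p \<le> m then X p q else 1) p = X p" by auto
    have "F (\<lambda>p q. if p \<le> m then X p q else 1) i = F X i" by (rule F2[OF mk True])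
    then show ?thesis using True by simp
  next
    case False then show ?thesis using assms unfolding RL_def by auto
  qed
qed

lemma Ttri_rec_gen:
  assumes "RL n' (Ttri n')" "2 \<le> n'"
  shows "Ttri (Suc n') X = Rtri (Suc n') (Ttri n' X)"
proof -
  define k' where "k' = n' - 2"
  have k': "n' = Suc (Suc k')" using assms(2) unfolding k'_def by arith
  have "Ttri (Suc n') X = Rtri (k' + 3) (\<lambda>i j. if i \<le> k' + 2 then Ttri (k' + 2) (\<lambda>p q. if p \<le> k' + 2 then X p q else 1) i j else X i j)"
    using k' by simp
  also have "\<dots> = Rtri (k' + 3) (Ttri (k' + 2) X)" using Phi_eq[of "k'+2" "Ttri (k'+2)" X] assms(1) k' by simp
  also have "k' + 3 = Suc n'" using k' by simp
  finally show ?thesis using k' by simp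
qed

lemma RL_Ttri_rec: "RL m (Ttri m) \<and> (2 \<le> m \<longrightarrow> (\<forall>X. Ttri (Suc m) X = Rtri (Suc m) (Ttri m X)))"
proof (induction m rule: nat_less_induct)
  case (1 m)
  show ?case
  proof (cases "m \<le> 2")
    case True
    have T: "Ttri m = (\<lambda>X. X)"
    proof -
      have "m = 0 \<or> m = 1 \<or> m = 2" using True by auto
      then show ?thesis by (auto simp: fun_eq_iff numeral_2_eq_2)
    qed
    have "Ttri (Suc m) X = Rtri (Suc m) (Ttri m X)" if "2 \<le> m" for X
      using Ttri_rec_gen[of m X] T RL_id that by simp
    then show ?thesis using T RL_id by simp
  next
    case False
    define k where "k = m - 3"
    have k: "m = Suc (Suc (Suc k))" using False unfolding k_def by arith
    have IH: "RL (k + 2) (Ttri (k + 2))" proof -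
      have lt: "k + 2 < m" using k by simp
      then show ?thesis using "1" by blast
    qed
    have rec: "Ttri (Suc n') X = Rtri (Suc n') (Ttri n' X)" if "n' = k + 2 \<or> n' = m" "RL n' (Ttri n')" "n' \<ge> 2" for n' X
      using Ttri_rec_gen[OF that(2,3)] .
    have Tm: "Ttri m = (\<lambda>X. Rtri m (Ttri (k + 2) X))"
      using rec[of "k+2"] IH k by (auto simp: fun_eq_iff)
    have RLm: "RL m (Ttri m)"
    proof -
      have a: "RL m (Ttri (k + 2))" using RL_mono[OF IH, of m] k by simp
      show ?thesis unfolding Tm using RL_comp[OF a RL_Rtri[of m]] .
    qed
    have m2: "2 \<le> m" using k by simp
    have "\<forall>X. Ttri (Suc m) X = Rtri (Suc m) (Ttri m X)"
      by (intro allI rec) (use RLm m2 in blast)+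
    then show ?thesis using RLm by blast
  qed
qed

lemma Good_Ttri: "2 \<le> n \<Longrightarrow> n \<le> N \<Longrightarrow> Good (tri N) (Ttri n)"
proof (induction n rule: dec_induct)
  case base
  have "Ttri 2 = (\<lambda>X. X)" by (auto simp: fun_eq_iff numeral_2_eq_2)
  then show ?case using Good_id[OF fin_tri] by simp
next
  case (step n)
  have "Ttri (Suc n) = (\<lambda>X. Rtri (Suc n) (Ttri n X))"
    using RL_Ttri_rec[of n] step by (auto simp: fun_eq_iff)
  then show ?case using Good_Rtri[OF step(3)] step by auto
qed

theorem theorem6p2:
  fixes n :: nat and u :: "nat \<times> nat \<Rightarrow> real"
  assumes "n \<ge> 2"
  shows "\<exists>J :: nat \<times> nat \<Rightarrow> nat \<times> nat \<Rightarrow> real.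
           (\<forall>a\<in>tri n. \<forall>b\<in>tri n.
              ((\<lambda>s. logT n (u(b := s)) a) has_real_derivative J a b) (at (u b)))
         \<and> (det_on (tri n) J = 1 \<or> det_on (tri n) J = -1)"
proof -
  obtain JF where HF: "HasJ (LF (Ttri n)) JF"
    and dF: "\<forall>v. det_on (tri n) (\<lambda>a b. JF v (ev b) a) = 1 \<or> det_on (tri n) (\<lambda>a b. JF v (ev b) a) = -1"
    using Good_Ttri[OF assms order_refl] unfolding Good_def by blast
  have LT: "logT n = LF (Ttri n)" by (simp add: logT_def LF_def fun_eq_iff)
  have D: "((\<lambda>s. logT n (u(b := s)) a) has_real_derivative JF u (ev b) a) (at (u b))" for a b
  proof -
    have d: "\<And>c. ((\<lambda>t. (u(b := t)) c) has_real_derivative ev b c) (at (u b))"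
      by (auto simp: ev_def intro!: derivative_eq_intros)
    show ?thesis using HF[unfolded HasJ_def, rule_format, of "\<lambda>t. u(b := t)" "ev b" "u b" a, OF d] unfolding LT by simp
  qed
  show ?thesis
    by (rule exI[of _ "\<lambda>a b. JF u (ev b) a"]) (use D dF in blast)
qed


end
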